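(* The function $\check J$ is continuous on $\mathcal M_T$.
   Context: Fix integers $n,m,T\ge 1$, a scalar $\varepsilon>0$, matrices $A_k\in\mathbb R^{n\times n}$, $B_k\in\mathbb R^{n\times m}$ ($k=0,\dots,T-1$), and symmetric positive definite matrices $R_k\in\mathbb R^{m\times m}$, $\Sigma_{w_k}\in\mathbb R^{n\times n}$ ($k=0,\dots,T-1$), $F,\Sigma_{x_{\mathrm{ini}}}\in\mathbb R^{n\times n}$. Let $\mathcal M_T=(\mathbb S^m_{\succeq 0})^T$ with $\mathbb S^m_{\succeq0}$ the symmetric PSD $m\times m$ matrices; $\Sigma^{1/2}$ the PSD square root, $|\cdot|$ the determinant. For $(\Sigma_{\rho_0},\dots,\Sigma_{\rho_{T-1}})\in\mathcal M_T$ define backwards $\Pi_T=F$, $C_k=(R_k+B_k^\top\Pi_{k+1}B_k)/\varepsilon$, $\Pi_k=A_k^\top\Pi_{k+1}A_k-\frac1\varepsilon A_k^\top\Pi_{k+1}B_k\Sigma_{\rho_k}^{1/2}(I+\Sigma_{\rho_k}^{1/2}C_k\Sigma_{\rho_k}^{1/2})^{-1}\Sigma_{\rho_k}^{1/2}B_k^\top\Pi_{k+1}A_k$, $\Sigma_{Q_k}=\varepsilon(R_k+B_k^\top\Pi_{k+1}B_k)^{-1}$, and $\check J(\Sigma_{\rho_0},\dots,\Sigma_{\rho_{T-1}})=\frac12\Big[\mathrm{Tr}(\Pi_0\Sigma_{x_{\mathrm{ini}}})+\sum_{k=0}^{T-1}\Big(\varepsilon\log\frac{|\Sigma_{\rho_k}+\Sigma_{Q_k}|}{|\Sigma_{Q_k}|}+\mathrm{Tr}(\Pi_{k+1}\Sigma_{w_k})\Big)\Big]$.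 *)

theory Defs
  imports "HOL-Analysis.Analysis"
begin

definition psd :: "real^'m^'m \<Rightarrow> bool" where
  "psd M \<longleftrightarrow> transpose M = M \<and> (\<forall>x. 0 \<le> x \<bullet> (M *v x))"

definition pd :: "real^'m^'m \<Rightarrow> bool" where
  "pd M \<longleftrightarrow> transpose M = M \<and> (\<forall>x. x \<noteq> 0 \<longrightarrow> 0 < x \<bullet> (M *v x))"

definition psd_sqrt :: "real^'m^'m \<Rightarrow> real^'m^'m" where
  "psd_sqrt M = (THE S. psd S \<and> S ** S = M)"

text \<open>One backward step of the Riccati-type recursion: given \<Pi>_{k+1} = P, compute \<Pi>_k.\<close>
definition Pi_step ::
  "real \<Rightarrow> real^'n^'n \<Rightarrow> real^'m^'n \<Rightarrow> real^'m^'m \<Rightarrow> real^'m^'m \<Rightarrow> real^'n^'n \<Rightarrow> real^'n^'n" where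
  "Pi_step \<epsilon> Ak Bk Rk Srho P =
     (let C = (1/\<epsilon>) *\<^sub>R (Rk + transpose Bk ** P ** Bk);
          H = psd_sqrt Srho
      in transpose Ak ** P ** Ak
         - (1/\<epsilon>) *\<^sub>R (transpose Ak ** P ** Bk ** H ** matrix_inv (mat 1 + H ** C ** H)
                         ** H ** transpose Bk ** P ** Ak))"

text \<open>PiR j = \<Pi>_{T-j}, for j \<le> T.\<close>
fun PiR ::
  "real \<Rightarrow> nat \<Rightarrow> (nat \<Rightarrow> real^'n^'n) \<Rightarrow> (nat \<Rightarrow> real^'m^'n) \<Rightarrow> (nat \<Rightarrow> real^'m^'m)
   \<Rightarrow> real^'n^'n \<Rightarrow> (nat \<Rightarrow> real^'m^'m) \<Rightarrow> nat \<Rightarrow> real^'n^'n" where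
  "PiR \<epsilon> T A B R F S 0 = F"
| "PiR \<epsilon> T A B R F S (Suc j) =
     Pi_step \<epsilon> (A (T - Suc j)) (B (T - Suc j)) (R (T - Suc j)) (S (T - Suc j)) (PiR \<epsilon> T A B R F S j)"

definition Pi ::
  "real \<Rightarrow> nat \<Rightarrow> (nat \<Rightarrow> real^'n^'n) \<Rightarrow> (nat \<Rightarrow> real^'m^'n) \<Rightarrow> (nat \<Rightarrow> real^'m^'m)
   \<Rightarrow> real^'n^'n \<Rightarrow> (nat \<Rightarrow> real^'m^'m) \<Rightarrow> nat \<Rightarrow> real^'n^'n" where
  "Pi \<epsilon> T A B R F S k = PiR \<epsilon> T A B R F S (T - k)"

definition SigmaQ ::
  "real \<Rightarrow> nat \<Rightarrow> (nat \<Rightarrow> real^'n^'n) \<Rightarrow> (nat \<Rightarrow> real^'m^'n) \<Rightarrow> (nat \<Rightarrow> real^'m^'m)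
   \<Rightarrow> real^'n^'n \<Rightarrow> (nat \<Rightarrow> real^'m^'m) \<Rightarrow> nat \<Rightarrow> real^'m^'m" where
  "SigmaQ \<epsilon> T A B R F S k =
     \<epsilon> *\<^sub>R matrix_inv (R k + transpose (B k) ** Pi \<epsilon> T A B R F S (Suc k) ** B k)"

text \<open>The cost function \<check>J, as a function of the sequence S = (\<Sigma>_{\<rho>_0},...,\<Sigma>_{\<rho>_{T-1}})
  (entries S k with k \<ge> T are irrelevant).\<close>
definition Jcheck ::
  "real \<Rightarrow> nat \<Rightarrow> (nat \<Rightarrow> real^'n^'n) \<Rightarrow> (nat \<Rightarrow> real^'m^'n) \<Rightarrow> (nat \<Rightarrow> real^'m^'m)
   \<Rightarrow> (nat \<Rightarrow> real^'n^'n) \<Rightarrow> real^'n^'n \<Rightarrow> real^'n^'n \<Rightarrow> (nat \<Rightarrow> real^'m^'m) \<Rightarrow> real" where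
  "Jcheck \<epsilon> T A B R Sw F Sx S =
     (1/2) * (trace (Pi \<epsilon> T A B R F S 0 ** Sx)
       + (\<Sum>k<T. \<epsilon> * ln (det (S k + SigmaQ \<epsilon> T A B R F S k) / det (SigmaQ \<epsilon> T A B R F S k))
                + trace (Pi \<epsilon> T A B R F S (Suc k) ** Sw k)))"

text \<open>\<M>_T, encoded as sequences whose first T entries are PSD.\<close>
definition MT :: "nat \<Rightarrow> (nat \<Rightarrow> real^'m^'m) set" where
  "MT T = {S. \<forall>k<T. psd (S k)}"

end

theory Submission
  imports Defs
begin


lemma matrix_inv_props:
  fixes A :: "real^'n^'n"
  assumes "invertible A"
  shows "A ** matrix_inv A = mat 1" "matrix_inv A ** A = mat 1"
proof -
  have "\<exists>A'. A ** A' = mat 1 \<and> A' ** A = mat 1" using assms invertible_def by blast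
  hence "A ** matrix_inv A = mat 1 \<and> matrix_inv A ** A = mat 1"
    unfolding matrix_inv_def by (rule someI_ex)
  thus "A ** matrix_inv A = mat 1" "matrix_inv A ** A = mat 1" by auto
qed

lemma transpose_add: "transpose (A + B) = transpose A + (transpose B :: real^'n^'m)"
  by (simp add: transpose_def vec_eq_iff)
lemma transpose_diff: "transpose (A - B) = transpose A - (transpose B :: real^'n^'m)"
  by (simp add: transpose_def vec_eq_iff)

lemma tr_dot: "x \<bullet> (transpose B *v y) = (B *v x) \<bullet> (y::real^'n)"
  by (metis dot_lmul_matrix vector_transpose_matrix)

lemma sym_dot: "transpose P = P \<Longrightarrow> x \<bullet> (P *v y) = (P *v x) \<bullet> (y::real^'n)"
  by (metis tr_dot)

lemma matrix_inv_unique: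
  fixes A B :: "real^'n^'n"
  assumes "A ** B = mat 1"
  shows "matrix_inv A = B" "invertible A"
proof -
  have "B ** A = mat 1" using assms by (metis matrix_left_right_inverse)
  hence inv: "invertible A" using assms invertible_def by blast
  thus "invertible A" .
  have "matrix_inv A = matrix_inv A ** (A ** B)" by (simp add: assms)
  also have "\<dots> = B" by (simp add: matrix_mul_assoc matrix_inv_props[OF inv])
  finally show "matrix_inv A = B" .
qed

lemma transpose_inv:
  fixes A :: "real^'n^'n"
  assumes "invertible A"
  shows "transpose (matrix_inv A) = matrix_inv (transpose A)"
proof -
  have "transpose A ** transpose (matrix_inv A) = mat 1"
    by (metis matrix_transpose_mul matrix_inv_props(2)[OF assms] transpose_mat)
  thus ?thesis using matrix_inv_unique by metis
qed

definition posq :: "real^'n^'n \<Rightarrow> bool" where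
  "posq W \<longleftrightarrow> (\<forall>x. x \<noteq> 0 \<longrightarrow> 0 < x \<bullet> (W *v x))"

lemma posq_invertible:
  fixes W :: "real^'n^'n"
  assumes "posq W" shows "invertible W"
proof -
  have "inj ((*v) W)"
    unfolding linear_injective_0[OF matrix_vector_mul_linear]
    using assms unfolding posq_def by (metis inner_zero_right less_irrefl)
  hence "det (matrix ((*v) W)) \<noteq> 0" using det_nz_iff_inj matrix_vector_mul_linear by blast
  thus ?thesis by (simp add: invertible_det_nz matrix_of_matrix_vector_mul)
qed

lemma pd_posq: "pd W \<Longrightarrow> posq W" by (simp add: pd_def posq_def)

lemma cont_mm:
  fixes f :: "'a::topological_space \<Rightarrow> real^'k^'n" and g :: "'a \<Rightarrow> real^'m^'k"
  assumes "continuous_on X f" "continuous_on X g"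
  shows "continuous_on X (\<lambda>x. f x ** g x)"
  unfolding matrix_matrix_mult_def
  by (intro continuous_on_vec_lambda continuous_on_sum continuous_on_mult
      continuous_on_component assms)

lemma cont_tr:
  fixes f :: "'a::topological_space \<Rightarrow> real^'k^'n"
  assumes "continuous_on X f"
  shows "continuous_on X (\<lambda>x. transpose (f x))"
  unfolding transpose_def
  by (intro continuous_on_vec_lambda continuous_on_component assms)

lemma cont_det:
  fixes f :: "'a::topological_space \<Rightarrow> real^'n^'n"
  assumes "continuous_on X f"
  shows "continuous_on X (\<lambda>x. det (f x))"
  unfolding det_def
  by (intro continuous_on_sum continuous_on_mult continuous_on_const continuous_on_prod
      continuous_on_component assms)

lemma cont_trace:
  fixes f :: "'a::topological_space \<Rightarrow> real^'n^'n"
  assumes "continuous_on X f"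
  shows "continuous_on X (\<lambda>x. trace (f x))"
  unfolding trace_def
  by (intro continuous_on_sum continuous_on_component assms)

lemma matrix_inv_cramer:
  fixes A :: "real^'n^'n"
  assumes "invertible A"
  shows "matrix_inv A = (\<chi> k j. det (\<chi> i l. if l = k then (if i = j then 1 else 0) else A$i$l) / det A)"
proof -
  have d: "det A \<noteq> 0" using assms invertible_det_nz by blast
  have "matrix_inv A $ k $ j = det (\<chi> i l. if l = k then (if i = j then 1 else 0) else A$i$l) / det A" for k j
  proof -
    let ?b = "(\<chi> i. if i = j then 1 else 0) :: real^'n"
    have "A *v (matrix_inv A *v ?b) = ?b"
      by (simp add: matrix_vector_mul_assoc matrix_inv_props[OF assms])
    hence "matrix_inv A *v ?b = (\<chi> k. det (\<chi> i l. if l = k then ?b $ i else A $ i $ l) / det A)"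
      using cramer[OF d] by blast
    hence "(matrix_inv A *v ?b) $ k = det (\<chi> i l. if l = k then ?b $ i else A $ i $ l) / det A"
      by simp
    moreover have "(matrix_inv A *v ?b) $ k = matrix_inv A $ k $ j"
      by (simp add: matrix_vector_mult_def if_distrib cong: if_cong)
    ultimately show ?thesis by (simp cong: if_cong)
  qed
  thus ?thesis by (simp add: vec_eq_iff)
qed

lemma cont_if_const: "continuous_on X g \<Longrightarrow> continuous_on X (\<lambda>x. if P then a else g x)"
  by (cases P) auto

lemma cont_inv:
  fixes f :: "'a::topological_space \<Rightarrow> real^'n^'n"
  assumes "continuous_on X f" "\<And>x. x \<in> X \<Longrightarrow> invertible (f x)"
  shows "continuous_on X (\<lambda>x. matrix_inv (f x))"
proof -
  have "continuous_on X (\<lambda>x. (\<chi> k j. det (\<chi> i l. if l = k then (if i = j then 1 else 0) else f x$i$l) / det (f x)))"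
    apply (intro continuous_on_vec_lambda continuous_on_divide cont_det)
    using assms invertible_det_nz
    by (auto intro!: continuous_on_vec_lambda continuous_on_component cont_if_const assms)
  thus ?thesis
    by (rule continuous_on_cong[THEN iffD1, rotated 2]) (auto simp: matrix_inv_cramer assms)
qed



lemma posq_det_pos:
  fixes W :: "real^'n^'n"
  assumes "posq W" shows "det W > 0"
proof -
  define g where "g t = det ((1 - t) *\<^sub>R mat 1 + t *\<^sub>R W)" for t :: real
  have cg: "continuous_on {0..1} g" unfolding g_def
    by (intro cont_det continuous_intros)
  have nz: "g t \<noteq> 0" if "0 \<le> t" "t \<le> 1" for t
  proof -
    have "posq ((1 - t) *\<^sub>R mat 1 + t *\<^sub>R W)"
      unfolding posq_def
    proof (intro allI impI)
      fix x :: "real^'n" assume x: "x \<noteq> 0"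
      have e: "x \<bullet> (((1 - t) *\<^sub>R mat 1 + t *\<^sub>R W) *v x) = (1 - t) * (x \<bullet> x) + t * (x \<bullet> (W *v x))"
        by (simp add: matrix_vector_mult_add_rdistrib scaleR_matrix_vector_assoc[symmetric] inner_add_right)
      have a: "x \<bullet> x > 0" using x by simp
      have b: "x \<bullet> (W *v x) > 0" using x assms posq_def by blast
      show "0 < x \<bullet> (((1 - t) *\<^sub>R mat 1 + t *\<^sub>R W) *v x)"
        unfolding e
      proof (cases "t < 1")
        case True
        then show "0 < (1 - t) * (x \<bullet> x) + t * (x \<bullet> (W *v x))"
          using a b that by (smt (verit) mult_nonneg_nonneg mult_pos_pos)
      next
        case False
        then show "0 < (1 - t) * (x \<bullet> x) + t * (x \<bullet> (W *v x))" using b that by simp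
      qed
    qed
    hence "invertible ((1 - t) *\<^sub>R mat 1 + t *\<^sub>R W)" by (rule posq_invertible)
    thus ?thesis unfolding g_def using invertible_det_nz by blast
  qed
  have g0: "g 0 = 1" by (simp add: g_def)
  have g1: "g 1 = det W" by (simp add: g_def)
  show ?thesis
  proof (rule ccontr)
    assume "\<not> det W > 0"
    hence "g 1 \<le> 0" using g1 by simp
    then obtain t where "0 \<le> t" "t \<le> 1" "g t = 0"
      using IVT2'[of g 1 0 0, OF _ _ _ cg] g0 by auto
    thus False using nz by blast
  qed
qed

lemma posq_inv:
  fixes W :: "real^'n^'n"
  assumes "posq W" shows "posq (matrix_inv W)"
  unfolding posq_def
proof (intro allI impI)
  fix x :: "real^'n" assume x: "x \<noteq> 0"
  have iv: "invertible W" using assms posq_invertible by blast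
  define y where "y = matrix_inv W *v x"
  have Wy: "W *v y = x" unfolding y_def
    by (simp add: matrix_vector_mul_assoc matrix_inv_props[OF iv])
  have "y \<noteq> 0" using Wy x by auto
  hence "0 < y \<bullet> (W *v y)" using assms posq_def by blast
  thus "0 < x \<bullet> (matrix_inv W *v x)" using Wy y_def by (simp add: inner_commute)
qed

lemma psd_posq_add:
  fixes A B :: "real^'n^'n"
  assumes "psd A" "posq B" shows "posq (A + B)"
  using assms unfolding psd_def posq_def
  by (simp add: matrix_vector_mult_add_rdistrib inner_add_right add_nonneg_pos)

lemma posq_scale:
  fixes B :: "real^'n^'n"
  assumes "c > 0" "posq B" shows "posq (c *\<^sub>R B)"
  using assms unfolding posq_def
  by (simp add: scaleR_matrix_vector_assoc[symmetric])

lemma quad_zero: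
  fixes a b :: real
  assumes "\<And>t. a * t + b * t^2 \<le> 0"
  shows "a = 0"
proof (rule ccontr)
  assume a: "a \<noteq> 0"
  define t where "t = a / (2 * (\<bar>b\<bar> + 1))"
  have den: "2 * (\<bar>b\<bar> + 1) > 0" by simp
  have "a * t = a^2 / (2 * (\<bar>b\<bar> + 1))" by (simp add: t_def power2_eq_square)
  moreover have "\<bar>b * t^2\<bar> \<le> a^2 / (2 * (\<bar>b\<bar> + 1)) / 2"
  proof -
    have "\<bar>b * t^2\<bar> = \<bar>b\<bar> * a^2 / (2 * (\<bar>b\<bar> + 1))^2"
      by (simp add: t_def abs_mult power_divide)
    also have "\<dots> = (\<bar>b\<bar> / (\<bar>b\<bar> + 1)) * (a^2 / (2 * (\<bar>b\<bar> + 1)) / 2)"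
      by (simp add: field_simps power2_eq_square)
    also have "\<dots> \<le> 1 * (a^2 / (2 * (\<bar>b\<bar> + 1)) / 2)"
      by (intro mult_right_mono) auto
    finally show ?thesis by simp
  qed
  moreover have "a^2 / (2 * (\<bar>b\<bar> + 1)) > 0" using a den by (simp add: divide_pos_pos)
  ultimately have "a * t + b * t^2 > 0"
  proof -
    assume h: "a * t = a^2 / (2 * (\<bar>b\<bar> + 1))" "\<bar>b * t^2\<bar> \<le> a^2 / (2 * (\<bar>b\<bar> + 1)) / 2"
      "0 < a^2 / (2 * (\<bar>b\<bar> + 1))"
    define Q where "Q = a^2 / (2 * (\<bar>b\<bar> + 1))"
    define Y where "Y = b * t^2"
    have "a * t = Q" "\<bar>Y\<bar> \<le> Q/2" "Q > 0" using h Q_def Y_def by auto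
    thus ?thesis unfolding Y_def[symmetric] by linarith
  qed
  thus False using assms[of t] by simp
qed



lemma eigvec_exists:
  fixes M :: "real^'m^'m"
  assumes sym: "transpose M = M" and V: "subspace V" and inv: "\<forall>x\<in>V. M *v x \<in> V"
    and ne: "v \<in> V" "v \<noteq> 0"
  shows "\<exists>x\<in>V. norm x = 1 \<and> M *v x = (x \<bullet> (M *v x)) *\<^sub>R x"
proof -
  let ?q = "\<lambda>x::real^'m. x \<bullet> (M *v x)"
  let ?K = "V \<inter> sphere 0 1"
  have cK: "compact ?K"
    using closed_Int_compact[OF closed_subspace[OF V] compact_sphere] by blast
  have "v /\<^sub>R norm v \<in> ?K" using ne V by (simp add: subspace_scale)
  hence neK: "?K \<noteq> {}" by blast
  have cq: "continuous_on ?K ?q"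
  proof -
    have "continuous_on ?K ((*v) M)"
      by (rule linear_continuous_on) (simp add: linear_linear[symmetric] matrix_vector_mul_linear)
    thus ?thesis by (intro continuous_intros)
  qed
  obtain x where xK: "x \<in> ?K" and xmax: "\<And>y. y \<in> ?K \<Longrightarrow> ?q y \<le> ?q x"
    using continuous_attains_sup[OF cK neK cq] by blast
  define l where "l = ?q x"
  have xV: "x \<in> V" and nx: "norm x = 1" using xK by auto
  have xx: "x \<bullet> x = 1" using nx by (simp add: dot_square_norm)
  have qscale: "?q (c *\<^sub>R z) = c^2 * ?q z" for c z
    by (simp add: matrix_vector_mult_scaleR power2_eq_square)
  have bound: "?q z \<le> l * (z \<bullet> z)" if "z \<in> V" for z
  proof (cases "z = 0")
    case True then show ?thesis by simp
  next
    case False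
    have "z /\<^sub>R norm z \<in> ?K" using that False V by (simp add: subspace_scale)
    hence "?q (z /\<^sub>R norm z) \<le> l" using xmax l_def by blast
    hence "?q z / (norm z)^2 \<le> l" using qscale[of "inverse (norm z)" z]
      by (simp add: power_inverse divide_inverse mult.commute)
    thus ?thesis using False by (simp add: divide_le_eq dot_square_norm mult.commute)
  qed
  have key: "y \<bullet> (M *v x) = l * (x \<bullet> y)" if yV: "y \<in> V" for y
  proof -
    have "2 * (y \<bullet> (M *v x) - l * (x \<bullet> y)) * t + (?q y - l * (y \<bullet> y)) * t^2 \<le> 0" for t
    proof -
      have "x + t *\<^sub>R y \<in> V" using xV yV V by (simp add: subspace_add subspace_scale)
      hence b: "?q (x + t *\<^sub>R y) \<le> l * ((x + t *\<^sub>R y) \<bullet> (x + t *\<^sub>R y))" by (rule bound)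
      have e1: "?q (x + t *\<^sub>R y) = l + 2 * t * (y \<bullet> (M *v x)) + t^2 * ?q y"
        using sym_dot[OF sym, of x y]
        by (simp add: l_def matrix_vector_right_distrib matrix_vector_mult_scaleR inner_add_left
            inner_add_right power2_eq_square algebra_simps inner_commute)
      have e2: "(x + t *\<^sub>R y) \<bullet> (x + t *\<^sub>R y) = 1 + 2 * t * (x \<bullet> y) + t^2 * (y \<bullet> y)"
        using xx by (simp add: inner_add_left inner_add_right power2_eq_square algebra_simps inner_commute)
      show ?thesis using b unfolding e1 e2 by (simp add: algebra_simps)
    qed
    from quad_zero[OF this] show ?thesis by simp
  qed
  define w where "w = M *v x - l *\<^sub>R x"
  have wV: "w \<in> V" unfolding w_def using xV inv V by (simp add: subspace_diff subspace_scale)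
  have "w \<bullet> w = w \<bullet> (M *v x) - l * (w \<bullet> x)" by (simp add: w_def inner_diff_right)
  also have "\<dots> = 0" using key[OF wV] by (simp add: inner_commute)
  finally have "w = 0" by simp
  thus ?thesis using xV nx l_def w_def by auto
qed



definition eigbasis :: "real^'m^'m \<Rightarrow> (real^'m) set \<Rightarrow> (real^'m) set \<Rightarrow> bool" where
  "eigbasis M V U \<longleftrightarrow> finite U \<and> U \<subseteq> V \<and> span U = V \<and> pairwise orthogonal U \<and>
     (\<forall>u\<in>U. norm u = 1 \<and> M *v u = (u \<bullet> (M *v u)) *\<^sub>R u)"

lemma eigenbasis_sub:
  fixes M :: "real^'m^'m"
  assumes sym: "transpose M = M"
  shows "subspace V \<Longrightarrow> (\<forall>x\<in>V. M *v x \<in> V) \<Longrightarrow> \<exists>U. eigbasis M V U"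
proof (induction "dim V" arbitrary: V rule: less_induct)
  case less
  show ?case
  proof (cases "\<exists>v\<in>V. v \<noteq> 0")
    case False
    then have "V = {0}" using less.prems subspace_0 by blast
    then have "eigbasis M V {}" by (simp add: eigbasis_def)
    then show ?thesis by blast
  next
    case True
    then obtain v where "v \<in> V" "v \<noteq> 0" by blast
    then obtain x where xV: "x \<in> V" and nx: "norm x = 1" and Mx: "M *v x = (x \<bullet> (M *v x)) *\<^sub>R x"
      using eigvec_exists[OF sym less.prems] by blast
    define l where "l = x \<bullet> (M *v x)"
    have Mx': "M *v x = l *\<^sub>R x" using Mx l_def by metis
    have xx: "x \<bullet> x = 1" using nx by (simp add: dot_square_norm)
    define V' where "V' = {y\<in>V. x \<bullet> y = 0}"
    have sV': "subspace V'"
      using less.prems(1) unfolding V'_def subspace_def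
      by (auto simp: inner_add_right)
    have iV': "\<forall>y\<in>V'. M *v y \<in> V'"
    proof
      fix y assume y: "y \<in> V'"
      have "x \<bullet> (M *v y) = (M *v x) \<bullet> y" by (rule sym_dot[OF sym])
      also have "\<dots> = 0" using y by (simp add: V'_def Mx')
      finally show "M *v y \<in> V'" using y less.prems(2) by (simp add: V'_def)
    qed
    have "span V' \<subset> span V"
    proof -
      have e1: "span V' = V'" using sV' span_eq_iff by blast
      have e2: "span V = V" using less.prems(1) span_eq_iff by blast
      have "V' \<subset> V"
      proof -
        have "V' \<subseteq> V" by (auto simp: V'_def)
        moreover have "x \<notin> V'" using xx by (simp add: V'_def)
        ultimately show ?thesis using xV by blast
      qed
      thus ?thesis unfolding e1 e2 .
    qed
    hence "dim V' < dim V" by (rule dim_psubset)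
    then obtain U' where U': "eigbasis M V' U'" using less.hyps sV' iV' by blast
    have U'1: "finite U'" "U' \<subseteq> V'" "span U' = V'" "pairwise orthogonal U'" "\<forall>u\<in>U'. norm u = 1"
      and U'ev: "\<forall>u\<in>U'. M *v u = (u \<bullet> (M *v u)) *\<^sub>R u"
      using U' unfolding eigbasis_def by blast+
    have xU': "x \<notin> U'" using U'1 xx unfolding V'_def by auto
    have "eigbasis M V (insert x U')"
      unfolding eigbasis_def
    proof (intro conjI)
      show "finite (insert x U')" using U'1 by auto
      show "insert x U' \<subseteq> V" using U'1 xV unfolding V'_def by auto
      show "pairwise orthogonal (insert x U')"
        using U'1 unfolding V'_def pairwise_insert orthogonal_def
        by (auto simp: inner_commute)
      show "\<forall>u\<in>insert x U'. norm u = 1 \<and> M *v u = (u \<bullet> (M *v u)) *\<^sub>R u"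
        using U'1 U'ev nx Mx by blast
      show "span (insert x U') = V"
      proof
        show "span (insert x U') \<subseteq> V"
          using U'1 xV less.prems(1) unfolding V'_def
          by (intro span_minimal) auto
        show "V \<subseteq> span (insert x U')"
        proof
          fix v assume v: "v \<in> V"
          have "v - (x \<bullet> v) *\<^sub>R x \<in> V'"
            using v xV less.prems(1) xx
            by (simp add: V'_def subspace_diff subspace_scale inner_diff_right)
          hence "v - (x \<bullet> v) *\<^sub>R x \<in> span U'" using U'1 by auto
          hence a: "v - (x \<bullet> v) *\<^sub>R x \<in> span (insert x U')"
            by (meson span_mono subset_insertI subsetD)
          have b: "(x \<bullet> v) *\<^sub>R x \<in> span (insert x U')"
            by (intro span_scale span_base) simp
          have "v = (v - (x \<bullet> v) *\<^sub>R x) + (x \<bullet> v) *\<^sub>R x" by simp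
          thus "v \<in> span (insert x U')" using span_add[OF a b] by simp
        qed
      qed
    qed
    thus ?thesis by blast
  qed
qed

lemma eigenbasis:
  fixes M :: "real^'m^'m"
  assumes sym: "transpose M = M"
  shows "\<exists>U. eigbasis M UNIV U"
  using eigenbasis_sub[OF sym, of UNIV] by simp

lemma coef:
  fixes U :: "(real^'m) set"
  assumes "finite U" "pairwise orthogonal U" "\<forall>u\<in>U. norm u = 1" "w \<in> U"
  shows "w \<bullet> (\<Sum>u\<in>U. c u *\<^sub>R u) = c w"
proof -
  have "w \<bullet> (\<Sum>u\<in>U. c u *\<^sub>R u) = (\<Sum>u\<in>U. c u * (w \<bullet> u))" by (simp add: inner_sum_right)
  also have "\<dots> = c w * (w \<bullet> w) + (\<Sum>u\<in>U - {w}. c u * (w \<bullet> u))"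
    using assms by (simp add: sum.remove)
  also have "(\<Sum>u\<in>U - {w}. c u * (w \<bullet> u)) = 0"
    using assms(2,4) by (intro sum.neutral) (auto simp: pairwise_def orthogonal_def)
  also have "w \<bullet> w = 1" using assms(3,4) by (simp add: dot_square_norm)
  finally show ?thesis by simp
qed

lemma inner_ext:
  assumes "\<And>y. y \<bullet> a = y \<bullet> b" shows "a = (b::'a::real_inner)"
proof -
  have "(a - b) \<bullet> (a - b) = 0" using assms[of "a - b"] by (simp add: inner_diff_right)
  thus ?thesis by simp
qed

lemma expand:
  fixes U :: "(real^'m) set"
  assumes "eigbasis M UNIV U"
  shows "x = (\<Sum>u\<in>U. (u \<bullet> x) *\<^sub>R u)"
proof -
  have f: "finite U" "pairwise orthogonal U" "\<forall>u\<in>U. norm u = 1" "span U = UNIV"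
    using assms unfolding eigbasis_def by blast+
  define y where "y = x - (\<Sum>u\<in>U. (u \<bullet> x) *\<^sub>R u)"
  have "orthogonal y u" if "u \<in> U" for u
    using coef[OF f(1-3) that, of "\<lambda>u. u \<bullet> x"] unfolding y_def orthogonal_def
    by (simp add: inner_diff_right inner_commute)
  hence "orthogonal y y" using orthogonal_to_span[of y U y] f(4) by auto
  hence "y = 0" by (simp add: orthogonal_def)
  thus ?thesis by (simp add: y_def)
qed

lemma sym_from_dot:
  fixes A :: "real^'m^'m"
  assumes "\<And>x y. y \<bullet> (A *v x) = x \<bullet> (A *v y)"
  shows "transpose A = A"
proof -
  have "transpose A *v x = A *v x" for x
  proof (rule inner_ext)
    fix y
    have "y \<bullet> (transpose A *v x) = (A *v y) \<bullet> x" by (rule tr_dot)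
    also have "\<dots> = y \<bullet> (A *v x)" using assms[of x y] by (simp add: inner_commute)
    finally show "y \<bullet> (transpose A *v x) = y \<bullet> (A *v x)" .
  qed
  thus ?thesis by (simp add: matrix_eq)
qed

lemma psd_sqrt_props:
  fixes M :: "real^'m^'m"
  assumes "psd M"
  shows "psd (psd_sqrt M)" "psd_sqrt M ** psd_sqrt M = M"
proof -
  have sym: "transpose M = M" using assms psd_def by blast
  obtain U where U: "eigbasis M UNIV U" using eigenbasis[OF sym] by blast
  have f: "finite U" "pairwise orthogonal U" "\<forall>u\<in>U. norm u = 1"
    and ev0: "\<And>u. u \<in> U \<Longrightarrow> M *v u = (u \<bullet> (M *v u)) *\<^sub>R u"
    using U unfolding eigbasis_def by blast+
  define lam where "lam u = u \<bullet> (M *v u)" for u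
  have ev: "\<And>u. u \<in> U \<Longrightarrow> M *v u = lam u *\<^sub>R u" using ev0 lam_def by metis
  have lam0: "lam u \<ge> 0" for u using assms psd_def lam_def by auto
  define g where "g u = sqrt (lam u)" for u
  have g0: "g u \<ge> 0" for u by (simp add: g_def lam0)
  have gg: "g u * g u = lam u" for u by (simp add: g_def lam0)
  define f where "f x = (\<Sum>u\<in>U. (g u * (u \<bullet> x)) *\<^sub>R u)" for x
  have lin: "linear f"
    unfolding f_def
    by (rule linearI) (auto simp: inner_add_right inner_scaleR_right scaleR_sum_right
        sum.distrib algebra_simps)
  define Sq where "Sq = matrix f"
  have Sqv: "Sq *v x = f x" for x
    unfolding Sq_def by (rule matrix_works) (simp add: linear_matrix_vector_mul_eq lin)
  have Mx: "M *v x = (\<Sum>u\<in>U. (lam u * (u \<bullet> x)) *\<^sub>R u)" for x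
  proof -
    have "M *v x = M *v (\<Sum>u\<in>U. (u \<bullet> x) *\<^sub>R u)" using expand[OF U] by metis
    also have "\<dots> = (\<Sum>u\<in>U. M *v ((u \<bullet> x) *\<^sub>R u))"
      by (rule linear_sum[OF matrix_vector_mul_linear])
    also have "\<dots> = (\<Sum>u\<in>U. (lam u * (u \<bullet> x)) *\<^sub>R u)"
      by (intro sum.cong refl) (simp add: matrix_vector_mult_scaleR ev)
    finally show ?thesis .
  qed
  have psdSq: "psd Sq"
    unfolding psd_def
  proof
    show "transpose Sq = Sq"
      by (rule sym_from_dot) (simp add: Sqv f_def inner_sum_right mult.commute mult.left_commute inner_commute)
    show "\<forall>x. 0 \<le> x \<bullet> (Sq *v x)"
      by (auto simp: Sqv f_def inner_sum_right inner_commute g0 mult.assoc intro!: sum_nonneg)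
  qed
  have sqSq: "Sq ** Sq = M"
  proof -
    have "(Sq ** Sq) *v x = M *v x" for x
    proof -
      have "(Sq ** Sq) *v x = f (f x)" by (simp add: Sqv matrix_vector_mul_assoc[symmetric])
      also have "\<dots> = (\<Sum>u\<in>U. (g u * (g u * (u \<bullet> x))) *\<^sub>R u)"
        unfolding f_def[of "f x"] using coef[OF f] unfolding f_def
        by (intro sum.cong refl) simp
      also have "\<dots> = M *v x" unfolding Mx by (simp add: gg mult.assoc[symmetric])
      finally show ?thesis .
    qed
    thus ?thesis by (simp add: matrix_eq)
  qed
  have uniq: "S = Sq" if S: "psd S" "S ** S = M" for S
  proof -
    have symS: "transpose S = S" using S psd_def by blast
    have Su: "S *v u = g u *\<^sub>R u" if u: "u \<in> U" for u
    proof (cases "lam u > 0")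
      case True
      define z where "z = S *v u - g u *\<^sub>R u"
      have "S *v z = - g u *\<^sub>R z"
      proof -
        have "S *v (S *v u) = lam u *\<^sub>R u"
          using S(2) ev[OF u] by (simp add: matrix_vector_mul_assoc)
        thus ?thesis using gg[of u]
          by (simp add: z_def matrix_vector_mult_diff_distrib matrix_vector_mult_scaleR algebra_simps)
      qed
      hence "0 \<le> - g u * (z \<bullet> z)" using S(1) psd_def by (metis inner_scaleR_right)
      moreover have "g u > 0" using True g_def by simp
      ultimately have "z \<bullet> z \<le> 0" by (simp add: mult_le_0_iff)
      hence "z \<bullet> z = 0" using inner_ge_zero[of z] by linarith
      hence "z = 0" by simp
      thus ?thesis by (simp add: z_def)
    next
      case False
      hence l0: "lam u = 0" using lam0[of u] by linarith
      have "S *v (S *v u) = 0"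
        using S(2) ev[OF u] l0 by (simp add: matrix_vector_mul_assoc)
      hence "(S *v u) \<bullet> (S *v u) = 0" using sym_dot[OF symS, of u "S *v u"] by simp
      hence "S *v u = 0" by simp
      thus ?thesis using l0 g_def by simp
    qed
    have "S *v x = Sq *v x" for x
    proof -
      have "S *v x = S *v (\<Sum>u\<in>U. (u \<bullet> x) *\<^sub>R u)" using expand[OF U] by metis
      also have "\<dots> = (\<Sum>u\<in>U. S *v ((u \<bullet> x) *\<^sub>R u))"
        by (rule linear_sum[OF matrix_vector_mul_linear])
      also have "\<dots> = Sq *v x"
        unfolding Sqv f_def
        by (intro sum.cong refl) (simp add: matrix_vector_mult_scaleR Su mult.commute)
      finally show ?thesis .
    qed
    thus ?thesis by (simp add: matrix_eq)
  qed
  have "psd_sqrt M = Sq"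
    unfolding psd_sqrt_def
  proof (rule the_equality)
    show "psd Sq \<and> Sq ** Sq = M" using psdSq sqSq by blast
    fix S assume "psd S \<and> S ** S = M"
    thus "S = Sq" using uniq by blast
  qed
  thus "psd (psd_sqrt M)" "psd_sqrt M ** psd_sqrt M = M" using psdSq sqSq by auto
qed



lemma matrix_add_rdistrib': "(A + B) ** C = A ** C + B ** (C::real^'k^'m)"
  by (simp add: matrix_matrix_mult_def vec_eq_iff sum.distrib distrib_right)

lemma scaleR_mm: "(c *\<^sub>R A) ** B = c *\<^sub>R (A ** (B::real^'k^'m))"
  by (simp add: matrix_matrix_mult_def vec_eq_iff sum_distrib_left mult.assoc)

lemma mm_scaleR: "A ** (c *\<^sub>R B) = c *\<^sub>R (A ** (B::real^'k^'m))"
  by (simp add: matrix_matrix_mult_def vec_eq_iff sum_distrib_left mult.left_commute)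

lemma inj_invertible:
  fixes A :: "real^'n^'n"
  assumes "\<And>x. A *v x = 0 \<Longrightarrow> x = 0" shows "invertible A"
proof -
  have "inj ((*v) A)"
    unfolding linear_injective_0[OF matrix_vector_mul_linear] using assms by blast
  hence "det (matrix ((*v) A)) \<noteq> 0" using det_nz_iff_inj matrix_vector_mul_linear by blast
  thus ?thesis by (simp add: invertible_det_nz matrix_of_matrix_vector_mul)
qed

lemma psd_congr:
  fixes P :: "real^'n^'n" and B :: "real^'m^'n"
  assumes "psd P" shows "psd (transpose B ** P ** B)"
  unfolding psd_def
proof
  have "transpose P = P" using assms psd_def by blast
  thus "transpose (transpose B ** P ** B) = transpose B ** P ** B"
    by (simp add: matrix_transpose_mul matrix_mul_assoc)
  show "\<forall>x. 0 \<le> x \<bullet> ((transpose B ** P ** B) *v x)"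
  proof
    fix x
    have "x \<bullet> ((transpose B ** P ** B) *v x) = (B *v x) \<bullet> (P *v (B *v x))"
    proof -
      have "(transpose B ** P ** B) *v x = transpose B *v (P *v (B *v x))"
        by (simp only: matrix_vector_mul_assoc matrix_mul_assoc)
      thus ?thesis by (simp only: tr_dot)
    qed
    thus "0 \<le> x \<bullet> ((transpose B ** P ** B) *v x)" using assms unfolding psd_def by simp
  qed
qed

lemma psd_add: "psd A \<Longrightarrow> psd B \<Longrightarrow> psd (A + (B::real^'n^'n))"
  unfolding psd_def by (simp add: transpose_add matrix_vector_mult_add_rdistrib inner_add_right)

lemma pd_psd: "pd A \<Longrightarrow> psd A"
  unfolding pd_def psd_def by (metis inner_zero_left less_eq_real_def matrix_vector_mult_0_right order_refl)



lemma step_lemma: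
  fixes \<epsilon> :: real and Ak :: "real^'n^'n" and Bk :: "real^'m^'n" and Rk Sig :: "real^'m^'m"
    and P :: "real^'n^'n"
  assumes eps: "\<epsilon> > 0" and R: "pd Rk" and Sig: "psd Sig" and P: "psd P"
  defines "C \<equiv> (1/\<epsilon>) *\<^sub>R (Rk + transpose Bk ** P ** Bk)"
  shows "invertible (mat 1 + C ** Sig)"
    and "Pi_step \<epsilon> Ak Bk Rk Sig P = transpose Ak ** P ** Ak
          - (1/\<epsilon>) *\<^sub>R (transpose Ak ** P ** Bk ** (Sig ** matrix_inv (mat 1 + C ** Sig))
                         ** transpose Bk ** P ** Ak)"
    and "psd (Pi_step \<epsilon> Ak Bk Rk Sig P)"
proof -
  define W where "W = Rk + transpose Bk ** P ** Bk"
  have CW: "C = (1/\<epsilon>) *\<^sub>R W" by (simp add: C_def W_def)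
  define H where "H = psd_sqrt Sig"
  have Hpsd: "psd H" and HH: "H ** H = Sig" using psd_sqrt_props[OF Sig] H_def by auto
  have symH: "transpose H = H" using Hpsd psd_def by blast
  have symP: "transpose P = P" using P psd_def by blast
  have symR: "transpose Rk = Rk" using R pd_def by blast
  have Wpsd: "psd W" unfolding W_def by (intro psd_add pd_psd R psd_congr P)
  have symW: "transpose W = W" using Wpsd psd_def by blast
  have symC: "transpose C = C" by (simp add: CW transpose_scalar symW)
  have Cnn: "0 \<le> x \<bullet> (C *v x)" for x
    using Wpsd eps unfolding CW psd_def by (simp add: scaleR_matrix_vector_assoc[symmetric])
  define G where "G = mat 1 + H ** C ** H"
  define K where "K = mat 1 + C ** Sig"
  have Gq: "x \<bullet> (G *v x) = x \<bullet> x + (H *v x) \<bullet> (C *v (H *v x))" for x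
  proof -
    have "G *v x = x + H *v (C *v (H *v x))"
      by (simp add: G_def matrix_vector_mult_add_rdistrib matrix_vector_mul_assoc[symmetric])
    thus ?thesis by (simp add: inner_add_right sym_dot[OF symH])
  qed
  have Gposq: "posq G" unfolding posq_def
  proof (intro allI impI)
    fix x :: "real^'m" assume "x \<noteq> 0"
    hence "0 < x \<bullet> x" by simp
    thus "0 < x \<bullet> (G *v x)" using Gq[of x] Cnn[of "H *v x"] by linarith
  qed
  have Ginv: "invertible G" by (rule posq_invertible[OF Gposq])
  have Kinv: "invertible K"
  proof (rule inj_invertible)
    fix x :: "real^'m" assume Kx: "K *v x = 0"
    have x: "x = - (C *v (Sig *v x))"
      using Kx by (simp add: K_def matrix_vector_mult_add_rdistrib matrix_vector_mul_assoc[symmetric] eq_neg_iff_add_eq_0)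
    have "(Sig *v x) \<bullet> x = - ((Sig *v x) \<bullet> (C *v (Sig *v x)))"
      by (subst x) (simp add: inner_minus_right)
    moreover have "(Sig *v x) \<bullet> x = (H *v x) \<bullet> (H *v x)"
    proof -
      have "(Sig *v x) \<bullet> x = x \<bullet> (H *v (H *v x))"
        by (simp only: inner_commute HH[symmetric] matrix_vector_mul_assoc)
      also have "\<dots> = (H *v x) \<bullet> (H *v x)" by (rule sym_dot[OF symH])
      finally show ?thesis .
    qed
    ultimately have "(H *v x) \<bullet> (H *v x) \<le> 0" using Cnn[of "Sig *v x"] by linarith
    hence "(H *v x) \<bullet> (H *v x) = 0" using inner_ge_zero[of "H *v x"] by linarith
    hence "H *v x = 0" by simp
    hence "Sig *v x = 0" by (simp add: HH[symmetric] matrix_vector_mul_assoc[symmetric])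
    thus "x = 0" using x by simp
  qed
  thus "invertible (mat 1 + C ** Sig)" by (simp add: K_def)
  have GH: "G ** H = H ** K"
    by (simp add: G_def K_def matrix_add_rdistrib' matrix_add_ldistrib matrix_mul_assoc HH[symmetric])
  have iGH: "matrix_inv G ** H = H ** matrix_inv K"
  proof -
    have "matrix_inv G ** H = matrix_inv G ** H ** (K ** matrix_inv K)"
      by (simp add: matrix_inv_props[OF Kinv])
    also have "\<dots> = matrix_inv G ** (G ** H) ** matrix_inv K"
      by (simp add: GH matrix_mul_assoc)
    also have "\<dots> = (matrix_inv G ** G) ** H ** matrix_inv K"
      by (simp only: matrix_mul_assoc)
    also have "\<dots> = H ** matrix_inv K"
      by (simp only: matrix_inv_props(2)[OF Ginv] matrix_mul_lid)
    finally show ?thesis .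
  qed
  have iden: "X ** H ** matrix_inv G ** H = X ** Sig ** matrix_inv K" for X :: "real^'m^'q"
  proof -
    have "X ** H ** matrix_inv G ** H = X ** (H ** (matrix_inv G ** H))" by (simp only: matrix_mul_assoc)
    also have "\<dots> = X ** (H ** (H ** matrix_inv K))" by (simp only: iGH)
    also have "\<dots> = X ** Sig ** matrix_inv K" by (simp only: matrix_mul_assoc HH)
    finally show ?thesis .
  qed
  have PS: "Pi_step \<epsilon> Ak Bk Rk Sig P = transpose Ak ** P ** Ak
          - (1/\<epsilon>) *\<^sub>R (transpose Ak ** P ** Bk ** H ** matrix_inv G ** H ** transpose Bk ** P ** Ak)"
    unfolding Pi_step_def Let_def G_def C_def H_def by (rule refl)
  show "Pi_step \<epsilon> Ak Bk Rk Sig P = transpose Ak ** P ** Ak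
          - (1/\<epsilon>) *\<^sub>R (transpose Ak ** P ** Bk ** (Sig ** matrix_inv (mat 1 + C ** Sig))
                         ** transpose Bk ** P ** Ak)"
    unfolding PS K_def[symmetric] by (simp add: matrix_mul_assoc iden)
  have symG: "transpose G = G"
    by (simp add: G_def transpose_add transpose_mat matrix_transpose_mul symH symC matrix_mul_assoc)
  have symiG: "transpose (matrix_inv G) = matrix_inv G"
    by (simp add: transpose_inv[OF Ginv] symG)
  show "psd (Pi_step \<epsilon> Ak Bk Rk Sig P)"
    unfolding psd_def
  proof
    show "transpose (Pi_step \<epsilon> Ak Bk Rk Sig P) = Pi_step \<epsilon> Ak Bk Rk Sig P"
      unfolding PS
      by (simp add: transpose_diff transpose_scalar matrix_transpose_mul symP symH symiG matrix_mul_assoc)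
    show "\<forall>x. 0 \<le> x \<bullet> (Pi_step \<epsilon> Ak Bk Rk Sig P *v x)"
    proof
      fix x :: "real^'n"
      define a where "a = Ak *v x"
      define y0 where "y0 = transpose Bk *v (P *v a)"
      define w where "w = H *v y0"
      define q where "q = matrix_inv G *v w"
      define u where "u = (1/\<epsilon>) *\<^sub>R q"
      define b where "b = Bk *v (H *v u)"
      have e1: "x \<bullet> (Pi_step \<epsilon> Ak Bk Rk Sig P *v x) = a \<bullet> (P *v a) - (1/\<epsilon>) * (q \<bullet> w)"
      proof -
        have m1: "(transpose Ak ** P ** Ak) *v x = transpose Ak *v (P *v a)"
          by (simp only: a_def matrix_vector_mul_assoc[symmetric])
        have m2: "(transpose Ak ** P ** Bk ** H ** matrix_inv G ** H ** transpose Bk ** P ** Ak) *v x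
                 = transpose Ak *v (P *v (Bk *v (H *v q)))"
          by (simp only: a_def q_def w_def y0_def matrix_vector_mul_assoc[symmetric])
        have i2: "a \<bullet> (P *v (Bk *v (H *v q))) = q \<bullet> w"
        proof -
          have "a \<bullet> (P *v (Bk *v (H *v q))) = (P *v a) \<bullet> (Bk *v (H *v q))"
            by (rule sym_dot[OF symP])
          also have "\<dots> = (Bk *v (H *v q)) \<bullet> (P *v a)" by (rule inner_commute)
          also have "\<dots> = (H *v q) \<bullet> y0" by (simp only: y0_def tr_dot)
          also have "\<dots> = q \<bullet> w" by (simp add: w_def sym_dot[OF symH])
          finally show ?thesis .
        qed
        have "x \<bullet> (Pi_step \<epsilon> Ak Bk Rk Sig P *v x) = x \<bullet> (transpose Ak *v (P *v a))
              - (1/\<epsilon>) * (x \<bullet> (transpose Ak *v (P *v (Bk *v (H *v q)))))"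
          unfolding PS matrix_vector_mult_diff_rdistrib scaleR_matrix_vector_assoc[symmetric] m1 m2
          by (simp only: inner_diff_right inner_scaleR_right)
        also have "\<dots> = a \<bullet> (P *v a) - (1/\<epsilon>) * (a \<bullet> (P *v (Bk *v (H *v q))))"
          by (simp only: tr_dot a_def)
        finally show ?thesis by (simp only: i2)
      qed
      have fnn: "0 \<le> (a - b) \<bullet> (P *v (a - b)) + (H *v u) \<bullet> (Rk *v (H *v u)) + \<epsilon> * (u \<bullet> u)"
      proof -
        have "0 \<le> (a - b) \<bullet> (P *v (a - b))" using P psd_def by blast
        moreover have "0 \<le> (H *v u) \<bullet> (Rk *v (H *v u))" using pd_psd[OF R] psd_def by blast
        moreover have "0 \<le> \<epsilon> * (u \<bullet> u)" using eps by simp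
        ultimately show ?thesis by linarith
      qed
      have bPa: "b \<bullet> (P *v a) = u \<bullet> w"
      proof -
        have "b \<bullet> (P *v a) = (H *v u) \<bullet> y0" by (simp only: b_def y0_def tr_dot)
        also have "\<dots> = u \<bullet> w" by (simp add: w_def sym_dot[OF symH])
        finally show ?thesis .
      qed
      have bPb: "b \<bullet> (P *v b) + (H *v u) \<bullet> (Rk *v (H *v u)) = \<epsilon> * (u \<bullet> (H *v (C *v (H *v u))))"
      proof -
        have "b \<bullet> (P *v b) = (H *v u) \<bullet> ((transpose Bk ** P ** Bk) *v (H *v u))"
          by (simp only: b_def tr_dot matrix_vector_mul_assoc[symmetric] matrix_mul_assoc[symmetric])
        hence "b \<bullet> (P *v b) + (H *v u) \<bullet> (Rk *v (H *v u)) = (H *v u) \<bullet> (W *v (H *v u))"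
          by (simp add: W_def matrix_vector_mult_add_rdistrib inner_add_right)
        also have "\<dots> = \<epsilon> * ((H *v u) \<bullet> (C *v (H *v u)))"
          using eps by (simp add: CW scaleR_matrix_vector_assoc[symmetric])
        also have "(H *v u) \<bullet> (C *v (H *v u)) = u \<bullet> (H *v (C *v (H *v u)))"
          by (simp add: sym_dot[OF symH])
        finally show ?thesis .
      qed
      have Gu: "G *v u = (1/\<epsilon>) *\<^sub>R w"
        by (simp add: u_def q_def matrix_vector_mult_scaleR matrix_vector_mul_assoc matrix_inv_props[OF Ginv])
      have uGu: "\<epsilon> * (u \<bullet> u) + \<epsilon> * (u \<bullet> (H *v (C *v (H *v u)))) = u \<bullet> w"
      proof -
        have "u \<bullet> (G *v u) = u \<bullet> u + u \<bullet> (H *v (C *v (H *v u)))"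
          by (simp add: G_def matrix_vector_mult_add_rdistrib matrix_vector_mul_assoc[symmetric] inner_add_right)
        moreover have "u \<bullet> (G *v u) = (1/\<epsilon>) * (u \<bullet> w)" by (simp add: Gu)
        ultimately have "u \<bullet> u + u \<bullet> (H *v (C *v (H *v u))) = (1/\<epsilon>) * (u \<bullet> w)" by simp
        hence "\<epsilon> * (u \<bullet> u + u \<bullet> (H *v (C *v (H *v u)))) = u \<bullet> w" using eps by simp
        thus ?thesis by (simp add: distrib_left)
      qed
      have fexp: "(a - b) \<bullet> (P *v (a - b)) = a \<bullet> (P *v a) - 2 * (b \<bullet> (P *v a)) + b \<bullet> (P *v b)"
        using sym_dot[OF symP, of a b]
        by (simp add: matrix_vector_mult_diff_distrib inner_diff_left inner_diff_right inner_commute)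
      have "u \<bullet> w = (1/\<epsilon>) * (q \<bullet> w)" by (simp add: u_def)
      then show "0 \<le> x \<bullet> (Pi_step \<epsilon> Ak Bk Rk Sig P *v x)"
        using e1 fnn bPa bPb uGu fexp by linarith
    qed
  qed
qed



lemma cont_coord: "continuous_on X (\<lambda>S::nat \<Rightarrow> real^'m^'m. S i)"
  by (rule continuous_on_subset[OF continuous_on_product_coordinates]) simp

lemma PiR_props:
  fixes \<epsilon> :: real and T :: nat
    and A :: "nat \<Rightarrow> real^'n^'n" and B :: "nat \<Rightarrow> real^'m^'n"
    and R :: "nat \<Rightarrow> real^'m^'m" and F :: "real^'n^'n"
  assumes eps: "\<epsilon> > 0" and R: "\<And>k. k < T \<Longrightarrow> pd (R k)" and F: "pd F"
  shows "j \<le> T \<Longrightarrow> continuous_on (MT T) (\<lambda>S. PiR \<epsilon> T A B R F S j) \<and>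
           (\<forall>S\<in>MT T. psd (PiR \<epsilon> T A B R F S j))"
proof (induction j)
  case 0
  then show ?case using pd_psd[OF F] by simp
next
  case (Suc j)
  define i where "i = T - Suc j"
  have iT: "i < T" using Suc.prems i_def by simp
  let ?P = "\<lambda>S. PiR \<epsilon> T A B R F S j"
  have IH: "continuous_on (MT T) ?P" "\<And>S. S \<in> MT T \<Longrightarrow> psd (?P S)" using Suc by auto
  have Si: "S \<in> MT T \<Longrightarrow> psd (S i)" for S using iT by (simp add: MT_def)
  let ?C = "\<lambda>S. (1/\<epsilon>) *\<^sub>R (R i + transpose (B i) ** ?P S ** B i)"
  let ?alt = "\<lambda>S. transpose (A i) ** ?P S ** A i
          - (1/\<epsilon>) *\<^sub>R (transpose (A i) ** ?P S ** B i ** (S i ** matrix_inv (mat 1 + ?C S ** S i))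
                         ** transpose (B i) ** ?P S ** A i)"
  have eq: "PiR \<epsilon> T A B R F S (Suc j) = ?alt S" if "S \<in> MT T" for S
    using step_lemma(2)[OF eps R[OF iT] Si[OF that] IH(2)[OF that], of "A i" "B i"]
    by (simp add: i_def)
  have ps: "psd (PiR \<epsilon> T A B R F S (Suc j))" if "S \<in> MT T" for S
    using step_lemma(3)[OF eps R[OF iT] Si[OF that] IH(2)[OF that], of "A i" "B i"]
    by (simp add: i_def)
  have inv: "invertible (mat 1 + ?C S ** S i)" if "S \<in> MT T" for S
    using step_lemma(1)[OF eps R[OF iT] Si[OF that] IH(2)[OF that], of "B i"] by simp
  have cC: "continuous_on (MT T) ?C"
    by (intro continuous_on_scaleR continuous_on_const continuous_on_add cont_mm IH(1))
  have cS: "continuous_on (MT T) (\<lambda>S. S i)" by (rule cont_coord)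
  have cK: "continuous_on (MT T) (\<lambda>S. matrix_inv (mat 1 + ?C S ** S i))"
    by (intro cont_inv continuous_on_add continuous_on_const cont_mm cC cS inv)
  have calt: "continuous_on (MT T) ?alt"
    by (intro continuous_on_diff continuous_on_scaleR continuous_on_const cont_mm IH(1) cS cK)
  have "continuous_on (MT T) (\<lambda>S. PiR \<epsilon> T A B R F S (Suc j))"
    using continuous_on_cong[THEN iffD2, OF refl eq calt] by blast
  thus ?case using ps by blast
qed



theorem lemma3:
  fixes \<epsilon> :: real and T :: nat
    and A :: "nat \<Rightarrow> real^'n^'n" and B :: "nat \<Rightarrow> real^'m^'n"
    and R :: "nat \<Rightarrow> real^'m^'m" and Sw :: "nat \<Rightarrow> real^'n^'n"
    and F Sx :: "real^'n^'n"
  assumes "T \<ge> 1" and "\<epsilon> > 0"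
    and "\<And>k. k < T \<Longrightarrow> pd (R k)"
    and "\<And>k. k < T \<Longrightarrow> pd (Sw k)"
    and "pd F" and "pd Sx"
  shows "continuous_on (MT T) (Jcheck \<epsilon> T A B R Sw F Sx)"
proof -
  note eps = assms(2) and Rpd = assms(3) and Fpd = assms(5)
  have cPi: "continuous_on (MT T) (\<lambda>S. Pi \<epsilon> T A B R F S k)" if "k \<le> T" for k
    using PiR_props[OF eps Rpd Fpd, where j = "T - k" and A = A and B = B] unfolding Pi_def by simp
  have psdPi: "psd (Pi \<epsilon> T A B R F S k)" if "k \<le> T" "S \<in> MT T" for k S
    using PiR_props[OF eps Rpd Fpd, where j = "T - k" and A = A and B = B] that unfolding Pi_def by simp
  have t0: "continuous_on (MT T) (\<lambda>S. trace (Pi \<epsilon> T A B R F S 0 ** Sx))"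
    by (intro cont_trace cont_mm cPi continuous_on_const) simp
  have tk: "continuous_on (MT T) (\<lambda>S. \<epsilon> * ln (det (S k + SigmaQ \<epsilon> T A B R F S k) / det (SigmaQ \<epsilon> T A B R F S k))
                + trace (Pi \<epsilon> T A B R F S (Suc k) ** Sw k))" if kT: "k \<in> {..<T}" for k
  proof -
    have k: "k < T" "Suc k \<le> T" using kT by auto
    let ?W = "\<lambda>S. R k + transpose (B k) ** Pi \<epsilon> T A B R F S (Suc k) ** B k"
    have Wq: "posq (?W S)" if "S \<in> MT T" for S
    proof -
      have "posq (transpose (B k) ** Pi \<epsilon> T A B R F S (Suc k) ** B k + R k)"
        by (intro psd_posq_add psd_congr psdPi k(2) that pd_posq Rpd k(1))
      thus ?thesis by (simp add: add.commute)
    qed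
    have Qeq: "SigmaQ \<epsilon> T A B R F S k = \<epsilon> *\<^sub>R matrix_inv (?W S)" for S
      by (simp add: SigmaQ_def)
    have Qq: "posq (SigmaQ \<epsilon> T A B R F S k)" if "S \<in> MT T" for S
      unfolding Qeq by (intro posq_scale eps posq_inv Wq that)
    have Sk: "psd (S k)" if "S \<in> MT T" for S using that k by (simp add: MT_def)
    have SQq: "posq (S k + SigmaQ \<epsilon> T A B R F S k)" if "S \<in> MT T" for S
      by (intro psd_posq_add Sk Qq that)
    have cQ: "continuous_on (MT T) (\<lambda>S. SigmaQ \<epsilon> T A B R F S k)"
      unfolding Qeq
      by (intro continuous_on_scaleR continuous_on_const cont_inv continuous_on_add cont_mm cPi k(2)
          posq_invertible Wq)
    have d1: "continuous_on (MT T) (\<lambda>S. det (S k + SigmaQ \<epsilon> T A B R F S k))"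
      by (intro cont_det continuous_on_add cont_coord cQ)
    have d2: "continuous_on (MT T) (\<lambda>S. det (SigmaQ \<epsilon> T A B R F S k))"
      by (intro cont_det cQ)
    have pos: "det (S k + SigmaQ \<epsilon> T A B R F S k) / det (SigmaQ \<epsilon> T A B R F S k) > 0"
      if "S \<in> MT T" for S
      using posq_det_pos[OF SQq[OF that]] posq_det_pos[OF Qq[OF that]] by simp
    have cl: "continuous_on (MT T) (\<lambda>S. ln (det (S k + SigmaQ \<epsilon> T A B R F S k) / det (SigmaQ \<epsilon> T A B R F S k)))"
    proof (rule continuous_on_ln)
      show "continuous_on (MT T) (\<lambda>S. det (S k + SigmaQ \<epsilon> T A B R F S k) / det (SigmaQ \<epsilon> T A B R F S k))"
      proof (rule continuous_on_divide[OF d1 d2])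
        show "\<forall>S\<in>MT T. det (SigmaQ \<epsilon> T A B R F S k) \<noteq> 0"
        proof
          fix S :: "nat \<Rightarrow> real^'m^'m" assume "S \<in> MT T"
          thus "det (SigmaQ \<epsilon> T A B R F S k) \<noteq> 0" using posq_det_pos[OF Qq] by force
        qed
      qed
      show "\<forall>S\<in>MT T. det (S k + SigmaQ \<epsilon> T A B R F S k) / det (SigmaQ \<epsilon> T A B R F S k) \<noteq> 0"
        using pos by (metis less_irrefl)
    qed
    show ?thesis
      by (intro continuous_on_add continuous_on_mult continuous_on_const cl cont_trace cont_mm cPi k(2))
  qed
  show ?thesis
    unfolding Jcheck_def
    by (intro continuous_on_mult continuous_on_const continuous_on_add t0 continuous_on_sum tk)
qed


end
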